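(* Let $n\ge1$ and let $F$ be an o-polynomial over $\mathbb{F}_{2^n}$. Then for every $b\in\mathbb{F}_{2^n}^*$, $$\sum_{v\in\mathbb{F}_{2^n}} W_F^2(bv,v)=2^{2n+1}.$$
   Context: $tr_n$ denotes the absolute trace from $\mathbb{F}_{2^n}$ to $\mathbb{F}_2$, $\mathbb{F}_{2^n}^*=\mathbb{F}_{2^n}\setminus\{0\}$, and $W_F(u,v)=\sum_{x\in\mathbb{F}_{2^n}}(-1)^{tr_n(vF(x))+tr_n(ux)}$. In $PG(2,2^n)$, a hyperoval is a set of $2^n+2$ points no three of which lie on a common line. A function (polynomial) $F$ over $\mathbb{F}_{2^n}$ is an o-polynomial if $\{(1,t,F(t)) : t\in\mathbb{F}_{2^n}\}\cup\{(0,1,0),(0,0,1)\}$ is a hyperoval of $PG(2,2^n)$. Equivalently (known fact), $F$ is an o-polynomial iff $F$ is a permutation and, for each $s\in\mathbb{F}_{2^n}$, the map $F_s$ defined by $F_s(t)=(F(t+s)+F(s))/t$ for $t\ne0$ and $F_s(0)=0$ is a permutation of $\mathbb{F}_{2^n}$. *)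

theory Defs
  imports Main
begin

text \<open>Absolute trace from GF(2^n) to GF(2), viewed inside the field.\<close>
definition tr :: "nat \<Rightarrow> 'a::field \<Rightarrow> 'a" where
  "tr n x = (\<Sum>i<n. x ^ (2 ^ i))"

text \<open>(-1)^y for y in the prime field GF(2) = {0,1}.\<close>
definition neg1_pow :: "'a::field \<Rightarrow> int" where
  "neg1_pow y = (if y = 0 then 1 else -1)"

definition walsh :: "nat \<Rightarrow> ('a::{field,finite} \<Rightarrow> 'a) \<Rightarrow> 'a \<Rightarrow> 'a \<Rightarrow> int" where
  "walsh n F u v = (\<Sum>x\<in>UNIV. neg1_pow (tr n (v * F x) + tr n (u * x)))"

text \<open>Projective plane PG(2,q): points are nonzero vectors of the field cubed up to
  nonzero scalars; three points are collinear iff the determinant of their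
  coordinate vectors vanishes.\<close>
definition proj_eq :: "'a::field \<times> 'a \<times> 'a \<Rightarrow> 'a \<times> 'a \<times> 'a \<Rightarrow> bool" where
  "proj_eq p q = (\<exists>c. c \<noteq> 0 \<and> p = (c * fst q, c * fst (snd q), c * snd (snd q)))"

definition det3 :: "'a::field \<times> 'a \<times> 'a \<Rightarrow> 'a \<times> 'a \<times> 'a \<Rightarrow> 'a \<times> 'a \<times> 'a \<Rightarrow> 'a" where
  "det3 p q r = (case p of (a1,a2,a3) \<Rightarrow> case q of (b1,b2,b3) \<Rightarrow> case r of (c1,c2,c3) \<Rightarrow>
      a1*(b2*c3 - b3*c2) - a2*(b1*c3 - b3*c1) + a3*(b1*c2 - b2*c1))"

definition hyperoval :: "('a::{field,finite} \<times> 'a \<times> 'a) set \<Rightarrow> bool" where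
  "hyperoval S \<longleftrightarrow>
     (\<forall>p\<in>S. p \<noteq> (0,0,0)) \<and>
     (\<forall>p\<in>S. \<forall>q\<in>S. p \<noteq> q \<longrightarrow> \<not> proj_eq p q) \<and>
     card S = card (UNIV :: 'a set) + 2 \<and>
     (\<forall>p\<in>S. \<forall>q\<in>S. \<forall>r\<in>S. p \<noteq> q \<and> p \<noteq> r \<and> q \<noteq> r \<longrightarrow> det3 p q r \<noteq> 0)"

definition o_polynomial :: "('a::{field,finite} \<Rightarrow> 'a) \<Rightarrow> bool" where
  "o_polynomial F \<longleftrightarrow>
     hyperoval ((\<lambda>t. (1, t, F t)) ` UNIV \<union> {(0,1,0), (0,0,1)})"

end

theory Submission
  imports Defs "HOL-Computational_Algebra.Polynomial"
begin

lemma char2: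
  assumes "n \<ge> 1" and "card (UNIV :: 'a::{field,finite} set) = 2 ^ n"
  shows "(1::'a) + 1 = 0"
proof -
  have "(\<Sum>x\<in>(UNIV::'a set). x + 1) = (\<Sum>x\<in>UNIV. x)"
    by (rule sum.reindex_bij_witness[of _ "\<lambda>x. x - 1" "\<lambda>x. x + 1"]) auto
  hence "of_nat (card (UNIV::'a set)) = (0::'a)"
    by (simp add: sum.distrib)
  hence "(of_nat (2 ^ n) :: 'a) = 0" using assms by simp
  hence "((1::'a) + 1) ^ n = 0" by simp
  thus ?thesis by simp
qed

lemma add_self0:
  assumes "(1::'a::field) + 1 = 0" shows "(a::'a) + a = 0"
proof -
  have "a + a = (1 + 1) * a" by (simp add: algebra_simps)
  thus ?thesis using assms by simp
qed

lemma frob: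
  assumes "(1::'a::field) + 1 = 0"
  shows "((x::'a) + y) ^ (2 ^ i) = x ^ (2 ^ i) + y ^ (2 ^ i)"
proof (induction i)
  case 0 then show ?case by simp
next
  case (Suc i)
  have sq: "(a + b)^2 = a^2 + b^2" for a b :: 'a
  proof -
    have "(a + b)^2 = a^2 + b^2 + (a*b + a*b)" by (simp add: power2_eq_square algebra_simps)
    thus ?thesis using add_self0[OF assms, of "a*b"] by simp
  qed
  have "(x + y) ^ (2 ^ Suc i) = ((x + y) ^ (2 ^ i))^2"
    by (simp add: power_mult[symmetric] mult.commute)
  also have "\<dots> = (x ^ (2 ^ i))^2 + (y ^ (2 ^ i))^2" using Suc sq by simp
  also have "\<dots> = x ^ (2 ^ Suc i) + y ^ (2 ^ Suc i)"
    by (simp add: power_mult[symmetric] mult.commute)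
  finally show ?case .
qed

lemma tr_add:
  assumes "(1::'a::field) + 1 = 0"
  shows "tr n ((x::'a) + y) = tr n x + tr n y"
  unfolding tr_def by (simp add: frob[OF assms] sum.distrib)

lemma fermat:
  assumes "card (UNIV :: 'a::{field,finite} set) = q"
  shows "(x::'a) ^ q = x"
proof (cases "x = 0")
  case True
  have "q \<noteq> 0" using assms[symmetric] by (simp add: card_gt_0_iff)
  then show ?thesis using True by simp
next
  case False
  let ?N = "{y::'a. y \<noteq> 0}"
  have "(\<Prod>y\<in>?N. x*y) = (\<Prod>y\<in>?N. y)"
    by (rule prod.reindex_bij_witness[of _ "\<lambda>y. y/x" "\<lambda>y. x*y"]) (use False in auto)
  moreover have "(\<Prod>y\<in>?N. x*y) = x ^ card ?N * (\<Prod>y\<in>?N. y)"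
    by (simp add: prod.distrib)
  moreover have "(\<Prod>y\<in>?N. y) \<noteq> 0" by simp
  ultimately have "x ^ card ?N = 1" by simp
  moreover have "card ?N = q - 1"
  proof -
    have "?N = UNIV - {0}" by auto
    thus ?thesis using assms by (simp add: card_Diff_singleton)
  qed
  moreover have "q \<noteq> 0" using assms[symmetric] by (simp add: card_gt_0_iff)
  ultimately show ?thesis by (cases q) auto
qed


lemma sum_sq:
  assumes "(1::'a::field) + 1 = 0"
  shows "(\<Sum>i\<in>A. (f i :: 'a))^2 = (\<Sum>i\<in>A. (f i)^2)"
proof (induction A rule: infinite_finite_induct)
  case (insert x F)
  then show ?case using frob[OF assms, of "f x" "sum f F" 1] by simp
qed auto

lemma tr_sq:
  assumes "n \<ge> 1" and "card (UNIV :: 'a::{field,finite} set) = 2 ^ n"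
  shows "(tr n (x::'a))^2 = tr n x"
proof -
  have c2: "(1::'a) + 1 = 0" using char2[OF assms] .
  let ?f = "\<lambda>i. x ^ (2 ^ i)"
  have "(tr n x)^2 = (\<Sum>i<n. (?f i)^2)" unfolding tr_def by (rule sum_sq[OF c2])
  also have "\<dots> = (\<Sum>i<n. ?f (Suc i))"
    by (simp add: power_mult[symmetric] mult.commute)
  also have "\<dots> = (\<Sum>i<n. ?f i)"
  proof -
    have "(\<Sum>i<Suc n. ?f i) = ?f 0 + (\<Sum>i<n. ?f (Suc i))" by (rule sum.lessThan_Suc_shift)
    moreover have "(\<Sum>i<Suc n. ?f i) = (\<Sum>i<n. ?f i) + ?f n" by simp
    moreover have "?f n = ?f 0" using fermat[OF assms(2)] by simp
    ultimately show ?thesis by simp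
  qed
  finally show ?thesis unfolding tr_def .
qed

lemma tr_01:
  assumes "n \<ge> 1" and "card (UNIV :: 'a::{field,finite} set) = 2 ^ n"
  shows "tr n (x::'a) = 0 \<or> tr n x = 1"
proof -
  have "tr n x * (tr n x - 1) = 0" using tr_sq[OF assms, of x]
    by (simp add: power2_eq_square algebra_simps)
  thus ?thesis by simp
qed

lemma tr_nonzero:
  assumes "n \<ge> 1" and "card (UNIV :: 'a::{field,finite} set) = 2 ^ n"
  shows "\<exists>u::'a. tr n u \<noteq> 0"
proof (rule ccontr)
  assume H: "\<not> (\<exists>u::'a. tr n u \<noteq> 0)"
  define p :: "'a poly" where "p = (\<Sum>i<n. monom 1 (2 ^ i))"
  have ev: "poly p x = tr n x" for x unfolding p_def tr_def by (simp add: poly_sum poly_monom)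
  have "coeff p (2 ^ (n - 1)) = (\<Sum>i<n. if 2 ^ (n-1) = (2::nat) ^ i then 1 else 0)"
    unfolding p_def by (simp add: coeff_sum coeff_monom)
  also have "\<dots> = (\<Sum>i\<in>{n-1}. 1)"
  proof -
    have "(\<Sum>i<n. if 2 ^ (n-1) = (2::nat) ^ i then (1::'a) else 0) = (\<Sum>i<n. if i = n - 1 then 1 else 0)"
      by (rule sum.cong) auto
    also have "\<dots> = 1" using assms(1) by (simp add: sum.delta)
    finally show ?thesis by simp
  qed
  finally have "coeff p (2 ^ (n - 1)) = 1" by simp
  hence pnz: "p \<noteq> 0" by auto
  have "degree p \<le> 2 ^ (n - 1)" unfolding p_def
  proof (rule degree_sum_le)
    fix i assume "i \<in> {..<n}"
    hence "(2::nat) ^ i \<le> 2 ^ (n-1)" by (intro power_increasing) auto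
    thus "degree (monom (1::'a) (2 ^ i)) \<le> 2 ^ (n - 1)" using degree_monom_le order_trans by blast
  qed auto
  moreover have "card {x. poly p x = 0} \<le> degree p" by (rule card_poly_roots_bound[OF pnz])
  moreover have "{x. poly p x = 0} = UNIV" using H ev by auto
  moreover have "(2::nat) ^ (n - 1) < 2 ^ n" using assms(1) by simp
  ultimately show False using assms(2) by (metis leD le_trans)
qed


definition ee :: "nat \<Rightarrow> 'a::field \<Rightarrow> int" where "ee n z = neg1_pow (tr n z)"

lemma ee_add:
  assumes "n \<ge> 1" and "card (UNIV :: 'a::{field,finite} set) = 2 ^ n"
  shows "ee n ((a::'a) + b) = ee n a * ee n b"
proof -
  have c2: "(1::'a) + 1 = 0" using char2[OF assms] .
  show ?thesis unfolding ee_def tr_add[OF c2] neg1_pow_def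
    using tr_01[OF assms, of a] tr_01[OF assms, of b] c2 by auto
qed

lemma char_sum:
  assumes "n \<ge> 1" and "card (UNIV :: 'a::{field,finite} set) = 2 ^ n"
  shows "(\<Sum>v\<in>UNIV. ee n (v * (c::'a))) = (if c = 0 then 2 ^ n else 0)"
proof (cases "c = 0")
  case True
  have "tr n (0::'a) = 0" unfolding tr_def by (simp add: power_0_left)
  then show ?thesis using True assms(2) by (simp add: ee_def neg1_pow_def)
next
  case False
  have R: "(\<Sum>v\<in>UNIV. ee n (v * c)) = (\<Sum>u\<in>(UNIV::'a set). ee n u)"
    by (rule sum.reindex_bij_witness[where i="\<lambda>u. u / c" and j="\<lambda>v. v * c"]) (use False in auto)
  obtain u0 :: 'a where u0: "tr n u0 \<noteq> 0" using tr_nonzero[OF assms] by blast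
  have "(\<Sum>u\<in>(UNIV::'a set). ee n u) = (\<Sum>u\<in>UNIV. ee n (u + u0))"
    by (rule sum.reindex_bij_witness[where i="\<lambda>u. u + u0" and j="\<lambda>u. u - u0"]) auto
  also have "\<dots> = (\<Sum>u\<in>(UNIV::'a set). - ee n u)"
  proof -
    have "ee n u0 = -1" using u0 by (simp add: ee_def neg1_pow_def)
    thus ?thesis by (simp add: ee_add[OF assms])
  qed
  finally have "(\<Sum>u\<in>(UNIV::'a set). ee n u) = 0" by (simp add: sum_negf)
  thus ?thesis using False R by simp
qed


lemma count2:
  assumes "n \<ge> 1" and "card (UNIV :: 'a::{field,finite} set) = 2 ^ n"
    and "o_polynomial F" and "(b::'a) \<noteq> 0"
  shows "card {y. F x + b*x + (F y + b*y) = 0} = 2"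
proof -
  have c2: "(1::'a) + 1 = 0" using char2[OF assms(1,2)] .
  define S where "S = (\<lambda>t. (1::'a, t, F t)) ` UNIV \<union> {(0,1,0), (0,0,1)}"
  have H: "\<And>p q r. p \<in> S \<Longrightarrow> q \<in> S \<Longrightarrow> r \<in> S \<Longrightarrow> p \<noteq> q \<Longrightarrow> p \<noteq> r \<Longrightarrow> q \<noteq> r \<Longrightarrow> det3 p q r \<noteq> 0"
    using assms(3) unfolding o_polynomial_def hyperoval_def S_def[symmetric] by blast
  have inS: "(1, t, F t) \<in> S" for t unfolding S_def by blast
  have inS2: "(0::'a, 1::'a, 0::'a) \<in> S" unfolding S_def by blast
  have Finj: "F y \<noteq> F z" if "y \<noteq> z" for y z
  proof
    assume e: "F y = F z"
    have "det3 (1, y, F y) (1, z, F z) (0, 1, 0) \<noteq> 0"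
      by (rule H[OF inS inS inS2]) (use that in auto)
    moreover have "det3 (1, y, F y) (1, z, F z) (0, 1, 0) = F y - F z"
      by (simp add: det3_def)
    ultimately show False using e by simp
  qed
  define g where "g y = (F y - F x) / (y - x)" for y
  define T where "T = {y. y \<noteq> x}"
  have ginj: "inj_on g T"
  proof (rule inj_onI)
    fix y z assume y: "y \<in> T" and z: "z \<in> T" and e: "g y = g z"
    show "y = z"
    proof (rule ccontr)
      assume yz: "y \<noteq> z"
      have yx: "y - x \<noteq> 0" and zx: "z - x \<noteq> 0" using y z unfolding T_def by auto
      have E: "(F y - F x) * (z - x) = (F z - F x) * (y - x)"
        using e yx zx unfolding g_def by (simp add: field_simps)
      have "det3 (1, x, F x) (1, y, F y) (1, z, F z) \<noteq> 0"
        by (rule H[OF inS inS inS]) (use y z yz T_def in auto)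
      moreover have "det3 (1, x, F x) (1, y, F y) (1, z, F z) =
          - ((F y - F x) * (z - x) - (F z - F x) * (y - x))"
        by (simp add: det3_def algebra_simps)
      ultimately show False using E by simp
    qed
  qed
  have gT: "g ` T \<subseteq> {c. c \<noteq> 0}"
    using Finj unfolding g_def T_def by auto
  have cT: "card T = card {c::'a. c \<noteq> 0}"
  proof -
    have "T = UNIV - {x}" "{c::'a. c \<noteq> 0} = UNIV - {0}" unfolding T_def by auto
    thus ?thesis by (simp add: card_Diff_singleton)
  qed
  have "g ` T = {c. c \<noteq> 0}"
    by (rule card_subset_eq) (use gT cT card_image[OF ginj] in auto)
  then obtain y0 where y0: "y0 \<in> T" "g y0 = b" using assms(4) by (metis (mono_tags, lifting) imageE mem_Collect_eq)
  have neq: "x \<noteq> y0" using y0 T_def by auto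
  have ident: "F x + b*x + (F y + b*y) = (F y - F x) - b*(y - x)" for y
  proof -
    have "(F y - F x) - b*(y - x) - (F x + b*x + (F y + b*y)) = - ((F x + F x) + (b*y + b*y))"
      by algebra
    also have "\<dots> = 0" using add_self0[OF c2, of "F x"] add_self0[OF c2, of "b*y"] by (simp only: add_0_left neg_0_equal_iff_equal minus_zero)
    finally show ?thesis by (metis eq_iff_diff_eq_0)
  qed
  have "{y. F x + b*x + (F y + b*y) = 0} = {x, y0}"
  proof (rule set_eqI)
    fix y
    show "y \<in> {y. F x + b*x + (F y + b*y) = 0} \<longleftrightarrow> y \<in> {x, y0}"
    proof (cases "y = x")
      case True
      then show ?thesis using add_self0[OF c2, of "F x + b*x"] by simp
    next
      case False
      hence yx: "y - x \<noteq> 0" by simp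
      have "F x + b*x + (F y + b*y) = 0 \<longleftrightarrow> g y = b"
        unfolding ident g_def using yx by (simp add: divide_eq_eq)
      also have "\<dots> \<longleftrightarrow> y = y0"
        using ginj y0 False T_def unfolding inj_on_def by auto
      finally show ?thesis using False by simp
    qed
  qed
  thus ?thesis using neq by simp
qed


theorem mainTheorem6:
  fixes F :: "'a::{field,finite} \<Rightarrow> 'a" and n :: nat
  assumes "n \<ge> 1" and "card (UNIV :: 'a set) = 2 ^ n" and "o_polynomial F"
  shows "\<forall>b. b \<noteq> 0 \<longrightarrow> (\<Sum>v\<in>UNIV. (walsh n F (b * v) v)\<^sup>2) = 2 ^ (2 * n + 1)"
proof (intro allI impI)
  fix b :: 'a assume b: "b \<noteq> 0"
  have c2: "(1::'a) + 1 = 0" using char2[OF assms(1,2)] .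
  define D where "D x = F x + b * x" for x
  have W: "walsh n F (b*v) v = (\<Sum>x\<in>UNIV. ee n (v * D x))" for v
    unfolding walsh_def ee_def D_def
  proof (rule sum.cong)
    fix x
    have "tr n (v * F x) + tr n (b * v * x) = tr n (v * F x + b * v * x)"
      by (rule tr_add[OF c2, symmetric])
    also have "v * F x + b * v * x = v * (F x + b * x)" by (simp add: algebra_simps)
    finally show "neg1_pow (tr n (v * F x) + tr n (b * v * x)) = neg1_pow (tr n (v * (F x + b * x)))"
      by simp
  qed simp
  have Wsq: "(walsh n F (b*v) v)^2 = (\<Sum>x\<in>UNIV. \<Sum>y\<in>UNIV. ee n (v * (D x + D y)))" for v
    unfolding W power2_eq_square sum_product
    by (simp add: ee_add[OF assms(1,2)] distrib_left)
  have "(\<Sum>v\<in>UNIV. (walsh n F (b * v) v)\<^sup>2) =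
      (\<Sum>v\<in>UNIV. \<Sum>x\<in>UNIV. \<Sum>y\<in>UNIV. ee n (v * (D x + D y)))"
    by (simp add: Wsq)
  also have "\<dots> = (\<Sum>x\<in>UNIV. \<Sum>y\<in>UNIV. \<Sum>v\<in>UNIV. ee n (v * (D x + D y)))"
  proof -
    have "(\<Sum>v\<in>UNIV. \<Sum>x\<in>UNIV. \<Sum>y\<in>UNIV. ee n (v * (D x + D y)))
        = (\<Sum>x\<in>UNIV. \<Sum>v\<in>UNIV. \<Sum>y\<in>UNIV. ee n (v * (D x + D y)))"
      by (rule sum.swap)
    also have "\<dots> = (\<Sum>x\<in>UNIV. \<Sum>y\<in>UNIV. \<Sum>v\<in>UNIV. ee n (v * (D x + D y)))"
      by (rule sum.cong[OF refl], rule sum.swap)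
    finally show ?thesis .
  qed
  also have "\<dots> = (\<Sum>x\<in>(UNIV::'a set). \<Sum>y\<in>(UNIV::'a set). if D x + D y = 0 then 2 ^ n else 0)"
    by (simp add: char_sum[OF assms(1,2)])
  also have "\<dots> = (\<Sum>x\<in>(UNIV::'a set). 2 ^ n * 2)"
  proof (rule sum.cong)
    fix x
    have "(\<Sum>y\<in>(UNIV::'a set). if D x + D y = 0 then (2::int) ^ n else 0)
        = of_nat (card {y. D x + D y = 0}) * 2 ^ n"
      by (simp add: sum.If_cases)
    also have "card {y. D x + D y = 0} = 2"
      unfolding D_def by (rule count2[OF assms b])
    finally show "(\<Sum>y\<in>(UNIV::'a set). if D x + D y = 0 then (2::int) ^ n else 0) = 2 ^ n * 2"
      by simp
  qed simp
  also have "\<dots> = 2 ^ (2 * n + 1)" using assms(2) by (simp add: power_add power_mult power2_eq_square power_mult_distrib[symmetric])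
  finally show "(\<Sum>v\<in>UNIV. (walsh n F (b * v) v)\<^sup>2) = 2 ^ (2 * n + 1)" .
qed

end
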